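(* Let $X$ be a finite subset of $\mathbb Z$ with at least four elements, let $P$ be a linked pair partition of $X$, and let $p\in P$. Then there exists $q\in P$ with $q\neq p$ such that $P\setminus\{q\}$ is a linked pair partition of $X\setminus q$.
   Context: A pair of a finite set $X$ is a two-element subset; a pair partition of $X$ is a partition of $X$ into pairs. Two distinct pairs $p_1,p_2$ of a pair partition of $X\subset\mathbb Z$ are called linked if $p_1\cap[\min p_2,\max p_2]\neq\emptyset$ and $p_2\cap[\min p_1,\max p_1]\neq\emptyset$. A linked path in $P$ from $p$ to $p'$ is a map $\gamma:\{0,\dots,l\}\to P$ with $\gamma(0)=p$, $\gamma(l)=p'$ and $\gamma(i),\gamma(i+1)$ linked for all $i<l$. $P$ is called linked if for any two elements $p_1,p_2\in P$ there is a linked path in $P$ from $p_1$ to $p_2$. *)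

theory Defs
  imports Main
begin

definition is_pair :: "'a set \<Rightarrow> bool" where
  "is_pair p \<longleftrightarrow> card p = 2"

definition pair_partition :: "'a set set \<Rightarrow> 'a set \<Rightarrow> bool" where
  "pair_partition P X \<longleftrightarrow>
     (\<forall>p\<in>P. is_pair p) \<and> \<Union>P = X \<and>
     (\<forall>p\<in>P. \<forall>q\<in>P. p \<noteq> q \<longrightarrow> p \<inter> q = {})"

definition linked_pairs :: "int set \<Rightarrow> int set \<Rightarrow> bool" where
  "linked_pairs p1 p2 \<longleftrightarrow> p1 \<noteq> p2 \<and>
     p1 \<inter> {Min p2..Max p2} \<noteq> {} \<and> p2 \<inter> {Min p1..Max p1} \<noteq> {}"

definition linked_path :: "int set set \<Rightarrow> int set \<Rightarrow> int set \<Rightarrow> nat \<Rightarrow> (nat \<Rightarrow> int set) \<Rightarrow> bool" where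
  "linked_path P p p' l \<gamma> \<longleftrightarrow>
     (\<forall>i\<le>l. \<gamma> i \<in> P) \<and> \<gamma> 0 = p \<and> \<gamma> l = p' \<and>
     (\<forall>i<l. linked_pairs (\<gamma> i) (\<gamma> (Suc i)))"

definition linked :: "int set set \<Rightarrow> bool" where
  "linked P \<longleftrightarrow> (\<forall>p1\<in>P. \<forall>p2\<in>P. \<exists>l \<gamma>. linked_path P p1 p2 l \<gamma>)"

end

theory Submission
  imports Defs
begin

definition EE :: "int set set \<Rightarrow> (int set \<times> int set) set" where
  "EE P = {(a,b). a \<in> P \<and> b \<in> P \<and> linked_pairs a b}"

lemma path_rtrancl:
  "linked_path P a b l \<gamma> \<Longrightarrow> (a,b) \<in> (EE P)\<^sup>*"
proof (induction l arbitrary: b)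
  case 0 then show ?case by (auto simp add: linked_path_def)
next
  case (Suc l)
  have "linked_path P a (\<gamma> l) l \<gamma>" using Suc.prems by (auto simp: linked_path_def)
  then have "(a, \<gamma> l) \<in> (EE P)\<^sup>*" using Suc.IH by blast
  moreover have "(\<gamma> l, b) \<in> EE P" using Suc.prems
    by (auto simp: linked_path_def EE_def)
  ultimately show ?case by (rule rtrancl_into_rtrancl)
qed

lemma rtrancl_path:
  assumes "(a,b) \<in> (EE P)\<^sup>*" "a \<in> P"
  shows "\<exists>l \<gamma>. linked_path P a b l \<gamma>"
  using assms(1)
proof (induction rule: rtrancl_induct)
  case base
  have "linked_path P a a 0 (\<lambda>_. a)" using assms(2) by (simp add: linked_path_def)
  then show ?case by blast
next
  case (step y z)
  then obtain l \<gamma> where g: "linked_path P a y l \<gamma>" by blast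
  let ?g = "\<gamma>(Suc l := z)"
  have "linked_path P a z (Suc l) ?g"
    using g step(2) unfolding linked_path_def EE_def
    by (auto simp: less_Suc_eq le_Suc_eq)
  then show ?case by blast
qed

lemma EE_sym: "sym (EE P)"
  unfolding sym_def EE_def linked_pairs_def by auto

lemma linked_iff: "linked P \<longleftrightarrow> (\<forall>a\<in>P. \<forall>b\<in>P. (a,b) \<in> (EE P)\<^sup>*)"
  unfolding linked_def using path_rtrancl rtrancl_path by blast

theorem mainTheorem7:
  fixes X :: "int set" and P :: "int set set" and p :: "int set"
  assumes "finite X" and "card X \<ge> 4"
    and "pair_partition P X" and "linked P" and "p \<in> P"
  shows "\<exists>q\<in>P. q \<noteq> p \<and> pair_partition (P - {q}) (X - q) \<and> linked (P - {q})"
proof -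
  have PP: "\<forall>p\<in>P. is_pair p" "\<Union>P = X" "\<forall>p\<in>P. \<forall>q\<in>P. p \<noteq> q \<longrightarrow> p \<inter> q = {}"
    using assms(3) by (auto simp: pair_partition_def)
  have finP: "finite P" using PP(2) assms(1)
    by (metis Sup_upper finite_Pow_iff finite_subset subsetI PowI)
  have conn: "\<forall>a\<in>P. \<forall>b\<in>P. (a,b) \<in> (EE P)\<^sup>*" using assms(4) linked_iff by blast
  define d where "d v = (LEAST n. (p,v) \<in> (EE P)^^n)" for v
  have dex: "(p,v) \<in> (EE P)^^(d v)" if "v \<in> P" for v
  proof -
    from conn that assms(5) obtain n where "(p,v) \<in> (EE P)^^n"
      using rtrancl_power by blast
    then show ?thesis unfolding d_def by (rule LeastI)
  qed
  have dle: "d v \<le> n" if "(p,v) \<in> (EE P)^^n" for v n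
    unfolding d_def using that by (rule Least_le)
  obtain v where v: "v \<in> P" "v \<noteq> p"
  proof (rule ccontr)
    assume "\<not> thesis"
    then have "P = {p}" using that assms(5) by blast
    then have "X = p" using PP(2) by auto
    then have "card X = 2" using PP(1) assms(5) by (simp add: is_pair_def)
    then show False using assms(2) by simp
  qed
  have "P \<noteq> {}" using assms(5) by blast
  define m where "m = Max (d ` P)"
  obtain q where q: "q \<in> P" "d q = m"
  proof -
    have "m \<in> d ` P" using Max_in[of "d ` P"] finP \<open>P \<noteq> {}\<close> unfolding m_def by auto
    then show ?thesis using that by auto
  qed
  have qmax: "d w \<le> d q" if "w \<in> P" for w
    using q finP that unfolding m_def by simp
  have "d v \<noteq> 0"
  proof
    assume "d v = 0"
    then show False using dex[OF v(1)] v(2) by simp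
  qed
  have dp: "d p = 0" using dle[of p 0] by simp
  have qp: "q \<noteq> p" using qmax[OF v(1)] \<open>d v \<noteq> 0\<close> dp by auto
  define E' where "E' = EE (P - {q})"
  have key: "\<And>w. (p,w) \<in> (EE P)^^n \<Longrightarrow> n = d w \<Longrightarrow> w \<noteq> q \<Longrightarrow> (p,w) \<in> E'\<^sup>*" for n
  proof (induction n)
    case 0 then show ?case by simp
  next
    case (Suc n w)
    from Suc.prems(1) obtain u where u: "(p,u) \<in> (EE P)^^n" "(u,w) \<in> EE P"
      by auto
    have "d u \<le> n" using dle u(1) by blast
    moreover have "d w \<le> Suc (d u)"
    proof -
      have "u \<in> P" using u(2) by (auto simp: EE_def)
      then have "(p,w) \<in> (EE P)^^(Suc (d u))" using dex u(2) by auto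
      then show ?thesis by (rule dle)
    qed
    ultimately have du: "d u = n" using Suc.prems(2) by simp
    have "u \<noteq> q"
    proof
      assume "u = q"
      then have "d q < d w" using du Suc.prems(2) by simp
      moreover have "w \<in> P" using u(2) by (auto simp: EE_def)
      ultimately show False using qmax by fastforce
    qed
    then have "(p,u) \<in> E'\<^sup>*" using Suc.IH u(1) du by blast
    moreover have "(u,w) \<in> E'" using u(2) \<open>u \<noteq> q\<close> Suc.prems(3)
      by (auto simp: E'_def EE_def)
    ultimately show ?case by simp
  qed
  have reach: "(p,w) \<in> E'\<^sup>*" if "w \<in> P - {q}" for w
    using key dex that by blast
  have symE: "sym (E'\<^sup>*)" unfolding E'_def by (rule sym_rtrancl[OF EE_sym])
  have "\<forall>a\<in>P-{q}. \<forall>b\<in>P-{q}. (a,b) \<in> E'\<^sup>*"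
  proof (intro ballI)
    fix a b assume "a \<in> P - {q}" "b \<in> P - {q}"
    then have "(a,p) \<in> E'\<^sup>*" "(p,b) \<in> E'\<^sup>*" using reach symE
      by (auto dest: symD)
    then show "(a,b) \<in> E'\<^sup>*" by simp
  qed
  then have L: "linked (P - {q})" unfolding linked_iff E'_def by blast
  have "pair_partition (P - {q}) (X - q)"
    unfolding pair_partition_def
  proof (intro conjI)
    show "\<Union>(P - {q}) = X - q"
    proof
      show "\<Union>(P - {q}) \<subseteq> X - q" using PP q(1) by blast
      show "X - q \<subseteq> \<Union>(P - {q})" using PP(2) by blast
    qed
  qed (use PP in auto)
  then show ?thesis using q(1) qp L by blast
qed

end
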